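(* Let $\{f_n, n\in\mathbb{N}\}\subset\mathcal{L}$, where $f_n(z)=C_nz^{l_n}e^{\alpha_nz}\prod_{j\ge1}(1+\beta_j(n)z)$, and put $\mu_1(n)=\sum_{j\ge1}\beta_j(n)$. Suppose there exist $a>0$, $C>0$ and $l\in\mathbb{N}_0$ such that for all $n$: $|\alpha_n|+\mu_1(n)\le a$, $|C_n|\le C$, $l_n\le l$. Then $\{f_n\}$ is bounded in $\mathcal{A}_a$, i.e. $\sup_n\|f_n\|_b<\infty$ for every $b>a$.
   Context: $\mathcal{L}$ is the set of entire functions $f(z)=Cz^le^{\alpha z}\prod_{j\ge1}(1+\beta_jz)$ with $C\in\mathbb{C}$, $l\in\mathbb{N}_0$, $\alpha\in\mathbb{R}$, $\beta_j\ge\beta_{j+1}\ge0$, $\sum_j\beta_j<\infty$. For $b>0$, $\|f\|_b=\sup_{k\in\mathbb{N}_0}b^{-k}|f^{(k)}(0)|$; $\mathcal{A}_a$ is the set of entire $f$ with $\|f\|_b<\infty$ for all $b>a$. *)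

theory Defs
  imports "HOL-Analysis.Analysis"
begin

definition L_params :: "(nat \<Rightarrow> real) \<Rightarrow> bool" where
  "L_params beta \<longleftrightarrow> (\<forall>j. beta (Suc j) \<le> beta j \<and> 0 \<le> beta (Suc j)) \<and> summable beta"

text \<open>The function C z^l e^(alpha z) prod_j (1 + beta_j z) (indices j start at 0 here).\<close>
definition Lfun :: "complex \<Rightarrow> nat \<Rightarrow> real \<Rightarrow> (nat \<Rightarrow> real) \<Rightarrow> complex \<Rightarrow> complex" where
  "Lfun c l alpha beta z =
     c * z ^ l * exp (complex_of_real alpha * z) * (\<Prod>j. 1 + complex_of_real (beta j) * z)"

text \<open>The seminorm-type quantity: f is bounded by M in the norm ||.||_b.\<close>
definition bnorm_le :: "real \<Rightarrow> (complex \<Rightarrow> complex) \<Rightarrow> real \<Rightarrow> bool" where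
  "bnorm_le b f M \<longleftrightarrow> (\<forall>k::nat. norm ((deriv ^^ k) f 0) / b ^ k \<le> M)"

end

theory Submission
  imports Defs "HOL-Complex_Analysis.Complex_Analysis"
begin

lemma beta_nonneg: "L_params beta \<Longrightarrow> 0 \<le> beta j"
  unfolding L_params_def
  by (cases j) (auto intro: order_trans)

lemma beta_summable: "L_params beta \<Longrightarrow> summable beta"
  unfolding L_params_def by auto

lemma prod_conv:
  assumes "L_params beta"
  shows "convergent_prod (\<lambda>j. 1 + complex_of_real (beta j) * z)"
proof -
  have "summable (\<lambda>j. beta j * norm z)"
    using beta_summable[OF assms] by (rule summable_mult2)
  moreover have "norm ((1 + complex_of_real (beta j) * z) - 1) = beta j * norm z" for j
    using beta_nonneg[OF assms, of j] by (simp add: norm_mult)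
  ultimately have "summable (\<lambda>j. norm ((1 + complex_of_real (beta j) * z) - 1))"
    by simp
  then show ?thesis
    by (intro abs_convergent_prod_imp_convergent_prod summable_imp_abs_convergent_prod)
qed

lemma prod_lim:
  assumes "L_params beta"
  shows "(\<lambda>n. \<Prod>j<n. 1 + complex_of_real (beta j) * z) \<longlonglongrightarrow> (\<Prod>j. 1 + complex_of_real (beta j) * z)"
  using convergent_prod_LIMSEQ[OF prod_conv[OF assms]] LIMSEQ_lessThan_iff_atMost
  by blast

lemma prod_norm_le:
  assumes "L_params beta"
  shows "norm (\<Prod>j. 1 + complex_of_real (beta j) * z) \<le> exp ((\<Sum>j. beta j) * norm z)"
proof -
  have bnd: "norm (\<Prod>j<n. 1 + complex_of_real (beta j) * z) \<le> exp ((\<Sum>j. beta j) * norm z)" for n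
  proof -
  have "norm (\<Prod>j<n. 1 + complex_of_real (beta j) * z) = (\<Prod>j<n. norm (1 + complex_of_real (beta j) * z))"
    by (simp add: prod_norm)
  also have "\<dots> \<le> (\<Prod>j<n. 1 + beta j * norm z)"
  proof (intro prod_mono conjI)
    fix j
    show "0 \<le> norm (1 + complex_of_real (beta j) * z)" by simp
    have "norm (1 + complex_of_real (beta j) * z) \<le> norm (1::complex) + norm (complex_of_real (beta j) * z)"
      by (rule norm_triangle_ineq)
    then show "norm (1 + complex_of_real (beta j) * z) \<le> 1 + beta j * norm z"
      using beta_nonneg[OF assms, of j] by (simp add: norm_mult)
  qed
  also have "\<dots> \<le> exp (\<Sum>j<n. beta j * norm z)"
    by (rule prod_le_exp_sum) (simp add: beta_nonneg[OF assms])
  also have "(\<Sum>j<n. beta j * norm z) \<le> (\<Sum>j. beta j * norm z)"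
    by (rule sum_le_suminf) (auto intro: summable_mult2 beta_summable[OF assms] simp: beta_nonneg[OF assms])
  also have "(\<Sum>j. beta j * norm z) = (\<Sum>j. beta j) * norm z"
    by (rule suminf_mult2[symmetric]) (rule beta_summable[OF assms])
  finally show ?thesis by simp
  qed
  show ?thesis
    by (rule LIMSEQ_le_const2[OF tendsto_norm[OF prod_lim[OF assms]]]) (use bnd in auto)
qed

lemma prod_holo:
  assumes "L_params beta"
  shows "(\<lambda>z. \<Prod>j. 1 + complex_of_real (beta j) * z) holomorphic_on UNIV"
proof (rule holomorphic_uniform_sequence[where f = "\<lambda>n z. \<Prod>j<n. 1 + complex_of_real (beta j) * z"])
  fix n show "(\<lambda>z. \<Prod>j<n. 1 + complex_of_real (beta j) * z) holomorphic_on UNIV"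
    by (intro holomorphic_intros)
next
  fix x :: complex
  have uc: "uniformly_convergent_on (cball x 1) (\<lambda>n z. \<Prod>j<n. 1 + complex_of_real (beta j) * z)"
  proof (rule uniformly_convergent_on_prod)
    fix n show "continuous_on (cball x 1) (\<lambda>z. complex_of_real (beta n) * z)"
      by (intro continuous_intros)
  next
    show "compact (cball x 1)" by simp
  next
    show "uniformly_convergent_on (cball x 1) (\<lambda>N z. \<Sum>n<N. norm (complex_of_real (beta n) * z))"
    proof (rule Weierstrass_m_test'[where M = "\<lambda>n. beta n * (norm x + 1)"])
      fix n and z :: complex assume "z \<in> cball x 1"
      then have d1: "norm (z - x) \<le> 1" by (simp add: dist_norm norm_minus_commute)
      have "norm z \<le> norm x + norm (z - x)" using norm_triangle_ineq[of x "z - x"] by simp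
      then have "norm z \<le> norm x + 1" using d1 by linarith
      then show "norm (norm (complex_of_real (beta n) * z)) \<le> beta n * (norm x + 1)"
        using beta_nonneg[OF assms, of n] by (simp add: norm_mult mult_left_mono)
    next
      show "summable (\<lambda>n. beta n * (norm x + 1))"
        by (intro summable_mult2 beta_summable[OF assms])
    qed
  qed
  then have ul: "uniform_limit (cball x 1) (\<lambda>n z. \<Prod>j<n. 1 + complex_of_real (beta j) * z)
      (\<lambda>z. lim (\<lambda>n. \<Prod>j<n. 1 + complex_of_real (beta j) * z)) sequentially"
    using uniformly_convergent_uniform_limit_iff by blast
  have "uniform_limit (cball x 1) (\<lambda>n z. \<Prod>j<n. 1 + complex_of_real (beta j) * z)
      (\<lambda>z. \<Prod>j. 1 + complex_of_real (beta j) * z) sequentially"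
    using ul by (simp add: limI[OF prod_lim[OF assms]])
  then show "\<exists>d>0. cball x d \<subseteq> UNIV \<and> uniform_limit (cball x d) (\<lambda>n z. \<Prod>j<n. 1 + complex_of_real (beta j) * z)
      (\<lambda>z. \<Prod>j. 1 + complex_of_real (beta j) * z) sequentially"
    by (intro exI[of _ 1]) auto
qed auto

lemma Lfun_holo:
  assumes "L_params beta"
  shows "Lfun c l alpha beta holomorphic_on UNIV"
proof -
  have "(\<lambda>z. c * z ^ l * exp (complex_of_real alpha * z) * (\<Prod>j. 1 + complex_of_real (beta j) * z)) holomorphic_on UNIV"
    by (intro holomorphic_intros prod_holo[OF assms])
  then show ?thesis unfolding Lfun_def[abs_def] .
qed

lemma Lfun_bound:
  assumes "L_params beta" "\<bar>alpha\<bar> + (\<Sum>j. beta j) \<le> a" "norm c \<le> C"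
  shows "norm (Lfun c l alpha beta z) \<le> C * norm z ^ l * exp (a * norm z)"
proof -
  have e: "norm (exp (complex_of_real alpha * z)) \<le> exp (\<bar>alpha\<bar> * norm z)"
  proof -
    have "norm (exp (complex_of_real alpha * z)) = exp (alpha * Re z)" by simp
    also have "alpha * Re z \<le> \<bar>alpha\<bar> * norm z"
    proof -
      have "alpha * Re z \<le> \<bar>alpha\<bar> * \<bar>Re z\<bar>" by (simp add: abs_mult[symmetric])
      also have "\<dots> \<le> \<bar>alpha\<bar> * norm z" by (intro mult_left_mono abs_Re_le_cmod) auto
      finally show ?thesis .
    qed
    finally show ?thesis by simp
  qed
  have "norm (Lfun c l alpha beta z) = norm c * norm z ^ l * norm (exp (complex_of_real alpha * z)) *
      norm (\<Prod>j. 1 + complex_of_real (beta j) * z)"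
    by (simp add: Lfun_def norm_mult norm_power)
  also have "\<dots> \<le> C * norm z ^ l * exp (\<bar>alpha\<bar> * norm z) * exp ((\<Sum>j. beta j) * norm z)"
    using order_trans[OF norm_ge_zero assms(3)]
    by (intro mult_mono e prod_norm_le[OF assms(1)] assms(3)) simp_all
  also have "\<dots> = C * norm z ^ l * exp ((\<bar>alpha\<bar> + (\<Sum>j. beta j)) * norm z)"
    by (simp add: distrib_right exp_add mult.assoc)
  also have "\<dots> \<le> C * norm z ^ l * exp (a * norm z)"
    using assms(2) order_trans[OF norm_ge_zero assms(3)] by (intro mult_left_mono) (simp_all add: mult_right_mono)
  finally show ?thesis .
qed

lemma e_le:
  assumes "k \<ge> (1::nat)"
  shows "exp 1 * real k ^ (k+1) \<le> real (k+1) ^ (k+1)"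
proof -
  define x where "x = real (k+1) / real k"
  have k0: "real k > 0" using assms by simp
  have x0: "x > 0" using k0 by (simp add: x_def)
  have "ln (1/x) \<le> 1/x - 1" using x0 by (intro ln_le_minus_one) simp
  also have "1/x - 1 = - 1 / real (k+1)" using k0 by (simp add: x_def field_simps)
  finally have "ln x \<ge> 1 / real (k+1)" using x0 by (simp add: ln_div)
  then have "1 \<le> real (k+1) * ln x" by (simp add: field_simps)
  then have "exp 1 \<le> exp (real (k+1) * ln x)" by simp
  also have "\<dots> = x ^ (k+1)" using x0 by (subst exp_of_nat_mult) simp
  also have "\<dots> = real (k+1) ^ (k+1) / real k ^ (k+1)" by (simp add: x_def power_divide)
  finally show ?thesis using k0 by (simp add: field_simps)
qed

lemma fact_bound:
  assumes "k \<ge> (1::nat)"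
  shows "fact k * exp (real k) \<le> exp 1 * real k * real k ^ k"
  using assms
proof (induction k rule: dec_induct)
  case base then show ?case by simp
next
  case (step k)
  have "fact (Suc k) * exp (real (Suc k)) = real (k+1) * exp 1 * (fact k * exp (real k))"
    by (simp add: exp_add algebra_simps)
  also have "\<dots> \<le> real (k+1) * exp 1 * (exp 1 * real k * real k ^ k)"
    using step.IH by (intro mult_left_mono) auto
  also have "\<dots> = real (k+1) * exp 1 * (exp 1 * real k ^ (k+1))" by simp
  also have "\<dots> \<le> real (k+1) * exp 1 * real (k+1) ^ (k+1)"
    using e_le[OF step.hyps(1)] by (intro mult_left_mono) auto
  finally show ?case by simp
qed

lemma poly_geom_bounded:
  assumes a: "a > 0" and q: "0 < q" "q < (1::real)"
  shows "\<exists>G. \<forall>k::nat. real k * (1 + real k / a) ^ L * q ^ k \<le> G"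
proof -
  define m where "m = Suc L"
  define p where "p = root m q"
  have p0: "0 < p" using q by (simp add: p_def m_def)
  have pm: "p ^ m = q" unfolding p_def m_def by (rule real_root_pow_pos2) (use q in auto)
  have p1: "p < 1" using q by (simp add: p_def m_def)
  define d where "d = 1/p - 1"
  have d0: "d > 0" using p0 p1 by (simp add: d_def field_simps)
  define B where "B = max 1 (1 / (a * d))"
  have B1: "B \<ge> 1" by (simp add: B_def)
  have Bd: "B * d \<ge> 1 / a"
  proof -
    have "B \<ge> 1 / (a*d)" by (simp add: B_def)
    then have "B * d \<ge> 1/(a*d) * d" using d0 by (intro mult_right_mono) auto
    then show ?thesis using d0 by simp
  qed
  have main: "(1 + real k / a) * p ^ k \<le> B" for k :: nat
  proof -
    have "real k / a \<le> B * real k * d"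
      using mult_left_mono[OF Bd, of "real k"] a by (simp add: field_simps)
    then have "1 + real k / a \<le> B * (1 + real k * d)"
      using B1 by (simp add: algebra_simps)
    also have "1 + real k * d \<le> (1 + d) ^ k"
      using d0 by (intro Bernoulli_inequality) simp
    also have "(1 + d) ^ k = 1 / p ^ k" using p0 by (simp add: d_def power_one_over)
    finally have "1 + real k / a \<le> B * (1 / p ^ k)" using B1 by simp
    then show ?thesis using p0 by (simp add: field_simps)
  qed
  have "real k * (1 + real k / a) ^ L * q ^ k \<le> a * B ^ m" for k :: nat
  proof -
    have "real k \<le> a * (1 + real k / a)" using a by (simp add: field_simps)
    then have "real k * (1 + real k / a) ^ L * q ^ k \<le> a * (1 + real k / a) * (1 + real k / a) ^ L * q ^ k"
      using q a by (intro mult_right_mono) auto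
    also have "\<dots> = a * ((1 + real k / a) * p ^ k) ^ m"
      by (simp add: m_def power_mult_distrib pm[symmetric] power_mult[symmetric] mult.commute mult.left_commute)
    also have "\<dots> \<le> a * B ^ m"
      using main[of k] a p0 by (intro mult_left_mono power_mono) auto
    finally show ?thesis .
  qed
  then show ?thesis by blast
qed


lemma cauchy_bound:
  assumes "L_params beta" "\<bar>alpha\<bar> + (\<Sum>j. beta j) \<le> a" "norm c \<le> C" "l \<le> L" "r > 0"
  shows "norm ((deriv ^^ k) (Lfun c l alpha beta) 0) \<le> fact k * (C * max 1 r ^ L * exp (a * r)) / r ^ k"
proof (rule Cauchy_inequality)
  show "Lfun c l alpha beta holomorphic_on ball 0 r"
    using Lfun_holo[OF assms(1)] by (rule holomorphic_on_subset) auto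
  show "continuous_on (cball 0 r) (Lfun c l alpha beta)"
    using holomorphic_on_imp_continuous_on[OF Lfun_holo[OF assms(1)]] by (rule continuous_on_subset) auto
  show "0 < r" by fact
  fix x :: complex assume "norm (0 - x) = r"
  then have nx: "norm x = r" by simp
  have C0: "C \<ge> 0" using order_trans[OF norm_ge_zero assms(3)] .
  have "norm (Lfun c l alpha beta x) \<le> C * r ^ l * exp (a * r)"
    using Lfun_bound[OF assms(1-3), of l x] unfolding nx .
  also have "r ^ l \<le> max 1 r ^ l" using assms(5) by (intro power_mono) auto
  also have "max 1 r ^ l \<le> max 1 r ^ L" using assms(4) by (intro power_increasing) auto
  finally show "norm (Lfun c l alpha beta x) \<le> C * max 1 r ^ L * exp (a * r)"
    using C0 by (simp add: mult_left_mono mult_right_mono)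
qed

lemma arith_step:
  assumes a: "a > 0" and b: "b > 0" and k: "k \<ge> 1" and C: "C \<ge> 0"
  shows "fact k * (C * max 1 (real k / a) ^ L * exp (a * (real k / a))) / (real k / a) ^ k / b ^ k
     \<le> C * exp 1 * (real k * (1 + real k / a) ^ L * (a / b) ^ k)"
proof -
  have k0: "real k > 0" using k by simp
  have X: "max 1 (real k / a) ^ L \<le> (1 + real k / a) ^ L"
    using a k0 by (intro power_mono) auto
  have X0: "0 \<le> max 1 (real k / a) ^ L" by simp
  have "fact k * (C * max 1 (real k / a) ^ L * exp (a * (real k / a))) / (real k / a) ^ k / b ^ k
      = C * max 1 (real k / a) ^ L * (fact k * exp (real k)) * (a ^ k / (real k ^ k * b ^ k))"
    using a by (simp add: power_divide field_simps)
  also have "\<dots> \<le> C * (1 + real k / a) ^ L * (exp 1 * real k * real k ^ k) * (a ^ k / (real k ^ k * b ^ k))"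
  proof (rule mult_right_mono)
    show "C * max 1 (real k / a) ^ L * (fact k * exp (real k)) \<le> C * (1 + real k / a) ^ L * (exp 1 * real k * real k ^ k)"
      by (rule mult_mono[OF mult_left_mono[OF X C] fact_bound[OF k]]) (use C a in auto)
    show "0 \<le> a ^ k / (real k ^ k * b ^ k)" using a b by simp
  qed
  also have "\<dots> = C * exp 1 * (real k * (1 + real k / a) ^ L * (a / b) ^ k)"
    using k0 b by (simp add: power_divide field_simps)
  finally show ?thesis .
qed

theorem proposition1p3:
  fixes c :: "nat \<Rightarrow> complex" and l :: "nat \<Rightarrow> nat" and alpha :: "nat \<Rightarrow> real"
    and beta :: "nat \<Rightarrow> nat \<Rightarrow> real" and a C :: real and L :: nat
  assumes params: "\<And>n. L_params (beta n)"
    and a_pos: "a > 0" and C_pos: "C > 0"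
    and bound_exp: "\<And>n. \<bar>alpha n\<bar> + (\<Sum>j. beta n j) \<le> a"
    and bound_C: "\<And>n. norm (c n) \<le> C"
    and bound_l: "\<And>n. l n \<le> L"
  shows "\<forall>b > a. \<exists>M. \<forall>n. bnorm_le b (Lfun (c n) (l n) (alpha n) (beta n)) M"
proof (intro allI impI)
  fix b assume ab: "b > a"
  have b0: "b > 0" using ab a_pos by simp
  obtain G where G: "\<And>k::nat. real k * (1 + real k / a) ^ L * (a / b) ^ k \<le> G"
    using poly_geom_bounded[OF a_pos, of "a / b" L] a_pos ab b0 by auto
  define M where "M = max (C * exp a) (C * exp 1 * G)"
  show "\<exists>M. \<forall>n. bnorm_le b (Lfun (c n) (l n) (alpha n) (beta n)) M"
  proof (intro exI allI)
    fix n
    show "bnorm_le b (Lfun (c n) (l n) (alpha n) (beta n)) M"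
      unfolding bnorm_le_def
    proof
      fix k :: nat
      note cb = cauchy_bound[OF params bound_exp bound_C bound_l]
      show "norm ((deriv ^^ k) (Lfun (c n) (l n) (alpha n) (beta n)) 0) / b ^ k \<le> M"
      proof (cases "k = 0")
        case True
        have "norm ((deriv ^^ k) (Lfun (c n) (l n) (alpha n) (beta n)) 0) \<le> fact k * (C * max 1 1 ^ L * exp (a * 1)) / 1 ^ k"
          by (rule cb) simp
        then show ?thesis using True by (simp add: M_def)
      next
        case False
        then have k1: "k \<ge> 1" by simp
        have r0: "real k / a > 0" using k1 a_pos by simp
        have "norm ((deriv ^^ k) (Lfun (c n) (l n) (alpha n) (beta n)) 0) / b ^ k
            \<le> fact k * (C * max 1 (real k / a) ^ L * exp (a * (real k / a))) / (real k / a) ^ k / b ^ k"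
          using cb[OF r0, of k] b0 by (intro divide_right_mono) auto
        also have "\<dots> \<le> C * exp 1 * (real k * (1 + real k / a) ^ L * (a / b) ^ k)"
          by (rule arith_step[OF a_pos b0 k1]) (use C_pos in simp)
        also have "\<dots> \<le> C * exp 1 * G"
          using G[of k] C_pos by (intro mult_left_mono) auto
        also have "\<dots> \<le> M" by (simp add: M_def)
        finally show ?thesis .
      qed
    qed
  qed
qed

end
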